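(* Let $\Omega=\{x\in\mathbb{R}^n: x^L\le x\le x^U\}$ with $x^L,x^U\in\mathbb{R}^n$ and $x^L_i<x^U_i$ for $i=1,\ldots,n$. Given any $x\in\Omega$ and $\alpha>0$, define $\alpha_{-i}:=\min(\alpha,x_i-x^L_i)$ and $\alpha_i:=\min(\alpha,x^U_i-x_i)$ for $i=1,\ldots,n$, and let $\mathcal{D}:=\bigcup_{i=1}^n\{-\alpha_{-i}e_i,\ \alpha_ie_i\}$, where $e_i$ are the coordinate vectors. Then $\mathcal{D}$ is a $\Lambda$-positive spanning set for $B(x,\alpha)\cap\Omega$ with $$\Lambda=\min\left[n,\ \frac{\sqrt n\,\alpha}{\min\left\{\alpha,\ \min_{i:\,x_i\neq x^L_i}(x_i-x^L_i),\ \min_{i:\,x_i\neq x^U_i}(x^U_i-x_i)\right\}}\right].$$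
   Context: $\|\cdot\|$ is the Euclidean norm, $B(y,r)=\{z:\|z-y\|\le r\}$. Given $x\in\Omega$, $\alpha>0$, $\Lambda\ge0$, a set $\{d_1,\ldots,d_p\}\subset\mathbb{R}^n$ is a $\Lambda$-positive spanning set for $B(x,\alpha)\cap\Omega$ if $x+d_i\in\Omega$ for all $i$ and, for every $v\in\mathbb{R}^n$ with $x+v\in\Omega$ and $\|v\|\le\alpha$, there exists $c\in\mathbb{R}^p$ with $c\ge0$, $v=\sum_ic_id_i$ and $\|c\|_1\le\Lambda$. (Directions with $\alpha_{\pm i}=0$ are zero vectors in $\mathcal{D}$.) *)

theory Defs
  imports "HOL-Analysis.Analysis"
begin

definition pos_spanning_set ::
  "real \<Rightarrow> ('a::real_normed_vector) set \<Rightarrow> 'a \<Rightarrow> real \<Rightarrow> 'a set \<Rightarrow> bool" where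
  "pos_spanning_set Lam D x alpha Omega \<longleftrightarrow>
     finite D \<and> (\<forall>d\<in>D. x + d \<in> Omega) \<and>
     (\<forall>v. x + v \<in> Omega \<and> norm v \<le> alpha \<longrightarrow>
        (\<exists>c. (\<forall>d\<in>D. c d \<ge> 0) \<and> v = (\<Sum>d\<in>D. c d *\<^sub>R d) \<and> (\<Sum>d\<in>D. \<bar>c d\<bar>) \<le> Lam))"

definition box_set :: "real^'n \<Rightarrow> real^'n \<Rightarrow> (real^'n) set" where
  "box_set xL xU = {y. \<forall>i. xL $ i \<le> y $ i \<and> y $ i \<le> xU $ i}"

definition coord_dirs :: "real^'n \<Rightarrow> real^'n \<Rightarrow> real^'n \<Rightarrow> real \<Rightarrow> (real^'n) set" where
  "coord_dirs xL xU x alpha =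
     (\<Union>i. {- (min alpha (x $ i - xL $ i)) *\<^sub>R axis i 1, (min alpha (xU $ i - x $ i)) *\<^sub>R axis i 1})"

definition Lambda_bound :: "real^'n \<Rightarrow> real^'n \<Rightarrow> real^'n \<Rightarrow> real \<Rightarrow> real" where
  "Lambda_bound xL xU x alpha =
     min (real CARD('n))
       (sqrt (real CARD('n)) * alpha /
         Min ({alpha} \<union> {x $ i - xL $ i | i. x $ i \<noteq> xL $ i}
                      \<union> {xU $ i - x $ i | i. x $ i \<noteq> xU $ i}))"

end

theory Submission
  imports Defs
begin

lemma l1_le: fixes v :: "real^'n" shows "(\<Sum>i\<in>UNIV. \<bar>v$i\<bar>) \<le> sqrt (real CARD('n)) * norm v"
proof -
  define w :: "real^'n" where "w = (\<chi> i. \<bar>v$i\<bar>)"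
  define o1 :: "real^'n" where "o1 = (\<chi> i. 1)"
  have "(\<Sum>i\<in>UNIV. \<bar>v$i\<bar>) = inner w o1" by (simp add: w_def o1_def inner_vec_def)
  also have "\<dots> \<le> norm w * norm o1" by (rule norm_cauchy_schwarz)
  also have "norm w = norm v" by (simp add: w_def norm_vec_def L2_set_def)
  also have "norm o1 = sqrt (real CARD('n))" by (simp add: o1_def norm_vec_def L2_set_def)
  finally show ?thesis by (simp add: mult.commute)
qed

lemma axis_scale_nth: "(c *\<^sub>R (axis i (1::real) :: real^'n)) $ j = (if j = i then c else 0)"
  by (simp add: axis_def)

theorem theorem5p1:
  fixes xL xU x :: "real^'n" and alpha :: real
  assumes "\<forall>i. xL $ i < xU $ i"
    and "x \<in> box_set xL xU"
    and "alpha > 0"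
  shows "pos_spanning_set (Lambda_bound xL xU x alpha) (coord_dirs xL xU x alpha) x alpha (box_set xL xU)"
proof -
  define a where "a i = min alpha (xU $ i - x $ i)" for i
  define b where "b i = min alpha (x $ i - xL $ i)" for i
  define g :: "'n \<times> bool \<Rightarrow> real^'n" where
    "g p = (if snd p then a (fst p) *\<^sub>R axis (fst p) 1 else (- b (fst p)) *\<^sub>R axis (fst p) 1)" for p
  have xb: "xL $ i \<le> x $ i" "x $ i \<le> xU $ i" for i using assms(2) by (auto simp: box_set_def)
  have a0: "a i \<ge> 0" "b i \<ge> 0" for i using xb[of i] assms(3) by (auto simp: a_def b_def)
  have ab: "a i > 0 \<or> b i > 0" for i using xb[of i] assms(3) spec[OF assms(1), of i] by (auto simp: a_def b_def)
  have D: "coord_dirs xL xU x alpha = g ` UNIV"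
    unfolding coord_dirs_def g_def a_def b_def
    by (auto simp: image_iff)
  have gnth: "g (i, s) $ j = (if j = i then (if s then a i else - b i) else 0)" for i s j
    by (simp add: g_def axis_def)
  have ginj: "g p = 0" if "g p = g q" "p \<noteq> q" for p q
  proof -
    obtain i s j t where pq: "p = (i,s)" "q = (j,t)" by (cases p, cases q)
    show ?thesis
    proof (cases "i = j")
      case True
      then have "s \<noteq> t" using that pq by auto
      then have "a i = - b i" using that(1) gnth[of i s i] gnth[of i t i] pq True
        by (metis (full_types))
      then show ?thesis using a0[of i] ab[of i] by auto
    next
      case False
      have "g p $ i = g q $ i" using that by simp
      then have "g p $ i = 0" using gnth pq False by simp
      then show ?thesis using pq gnth by (auto simp: vec_eq_iff)
    qed
  qed
  have sumD: "(\<Sum>d\<in>coord_dirs xL xU x alpha. h d) = (\<Sum>i\<in>UNIV. h (g (i,True)) + h (g (i,False)))"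
    if h0: "h 0 = 0" for h :: "real^'n \<Rightarrow> 'b::comm_monoid_add"
  proof -
    have "(\<Sum>d\<in>coord_dirs xL xU x alpha. h d) = (\<Sum>p\<in>UNIV. h (g p))"
    proof -
      have "sum h (g ` UNIV) = sum (h \<circ> g) UNIV"
      proof (rule sum.reindex_nontrivial)
        fix p q assume "g p = g q" "p \<noteq> q"
        then have "g p = 0" by (rule ginj)
        then show "h (g p) = 0" by (simp add: h0)
      qed simp
      then show ?thesis by (simp add: D)
    qed
    also have "\<dots> = (\<Sum>p\<in>UNIV \<times> UNIV. h (g p))" by simp
    also have "\<dots> = (\<Sum>i\<in>UNIV. \<Sum>s\<in>UNIV. h (g (i,s)))" by (simp add: sum.cartesian_product)
    also have "\<dots> = (\<Sum>i\<in>UNIV. h (g (i,True)) + h (g (i,False)))"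
      by (simp add: UNIV_bool add.commute)
    finally show ?thesis .
  qed
  show ?thesis
    unfolding pos_spanning_set_def
  proof (intro conjI allI impI ballI)
    show "finite (coord_dirs xL xU x alpha)" unfolding D by simp
  next
    fix d assume "d \<in> coord_dirs xL xU x alpha"
    then obtain i s where d: "d = g (i,s)" unfolding D by auto
    show "x + d \<in> box_set xL xU"
      unfolding box_set_def d using xb assms(3)
      by (auto simp: gnth a_def b_def min_def intro: order_trans[OF xb(1)] order_trans[OF _ xb(2)])
  next
    fix v assume v: "x + v \<in> box_set xL xU \<and> norm v \<le> alpha"
    have vb: "xL $ i \<le> x $ i + v $ i" "x $ i + v $ i \<le> xU $ i" "\<bar>v $ i\<bar> \<le> alpha" for i
      using v component_le_norm_cart[of v i] by (auto simp: box_set_def)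
    have vpos: "v $ i > 0 \<Longrightarrow> v $ i \<le> a i" for i using vb[of i] by (auto simp: a_def)
    have vneg: "v $ i < 0 \<Longrightarrow> - v $ i \<le> b i" for i using vb[of i] by (auto simp: b_def)
    define c :: "real^'n \<Rightarrow> real" where
      "c d = (\<Sum>j\<in>UNIV. if d $ j \<noteq> 0 \<and> v $ j * d $ j > 0 then v $ j / d $ j else 0)" for d
    define cp where "cp i = (if v $ i > 0 then v $ i / a i else 0)" for i
    define cn where "cn i = (if v $ i < 0 then - v $ i / b i else 0)" for i
    have c0: "c 0 = 0" by (simp add: c_def)
    have cg: "c (g (i,s)) = (if g (i,s) $ i \<noteq> 0 \<and> v $ i * g (i,s) $ i > 0 then v $ i / g (i,s) $ i else 0)" for i s
    proof -
      have "c (g (i,s)) = (\<Sum>j\<in>UNIV. if j = i then (if g (i,s) $ i \<noteq> 0 \<and> v $ i * g (i,s) $ i > 0 then v $ i / g (i,s) $ i else 0) else 0)"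
        unfolding c_def by (rule sum.cong) (auto simp: gnth)
      then show ?thesis by simp
    qed
    have cT: "c (g (i,True)) = cp i" for i
    proof -
      have "c (g (i,True)) = (if a i \<noteq> 0 \<and> v $ i * a i > 0 then v $ i / a i else 0)"
        unfolding cg by (simp add: gnth)
      also have "\<dots> = cp i" using vpos[of i] a0[of i] unfolding cp_def
        by (auto simp: zero_less_mult_iff)
      finally show ?thesis .
    qed
    have cF: "c (g (i,False)) = cn i" for i
    proof -
      have "c (g (i,False)) = (if b i \<noteq> 0 \<and> v $ i * (- b i) > 0 then v $ i / (- b i) else 0)"
        unfolding cg by (simp add: gnth)
      also have "\<dots> = cn i" using vneg[of i] a0[of i] unfolding cn_def
        by (auto simp: zero_less_mult_iff mult_less_0_iff)
      finally show ?thesis .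
    qed
    have cpn: "cp i \<ge> 0" "cn i \<ge> 0" for i using a0[of i] by (auto simp: cp_def cn_def divide_nonpos_nonneg)
    show "\<exists>c. (\<forall>d\<in>coord_dirs xL xU x alpha. 0 \<le> c d) \<and>
             v = (\<Sum>d\<in>coord_dirs xL xU x alpha. c d *\<^sub>R d) \<and>
             (\<Sum>d\<in>coord_dirs xL xU x alpha. \<bar>c d\<bar>) \<le> Lambda_bound xL xU x alpha"
    proof (intro exI conjI ballI)
      fix d assume "d \<in> coord_dirs xL xU x alpha"
      then obtain i s where d: "d = g (i,s)" unfolding D by auto
      show "0 \<le> c d" using cpn d cT cF by (cases s) auto
    next
      show "v = (\<Sum>d\<in>coord_dirs xL xU x alpha. c d *\<^sub>R d)"
      proof -
        have "(\<Sum>d\<in>coord_dirs xL xU x alpha. c d *\<^sub>R d)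
            = (\<Sum>i\<in>UNIV. cp i *\<^sub>R g (i,True) + cn i *\<^sub>R g (i,False))"
          by (subst sumD) (auto simp: cT cF)
        also have "\<dots> = (\<Sum>i\<in>UNIV. v $ i *s axis i 1)"
        proof (rule sum.cong[OF refl])
          fix i
          show "cp i *\<^sub>R g (i,True) + cn i *\<^sub>R g (i,False) = v $ i *s axis i 1"
            using vpos[of i] vneg[of i]
          proof (cases "v $ i > 0")
            case True
            then have "cn i = 0" "cp i = v $ i / a i" "a i > 0" using vpos[of i] by (auto simp: cn_def cp_def)
            then show ?thesis by (simp add: vec_eq_iff gnth axis_def)
          next
            case F: False
            show ?thesis
            proof (cases "v $ i < 0")
              case True
              then have "cp i = 0" "cn i = - v $ i / b i" "b i > 0" using vneg[of i] F by (auto simp: cn_def cp_def)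
              then show ?thesis by (simp add: vec_eq_iff gnth axis_def)
            next
              case False
              then have "cp i = 0" "cn i = 0" "v $ i = 0" using F by (auto simp: cn_def cp_def)
              then show ?thesis by (simp add: vec_eq_iff gnth axis_def)
            qed
          qed        qed
        also have "\<dots> = v" by (rule basis_expansion)
        finally show ?thesis by simp
      qed
    next
      define m where "m = Min ({alpha} \<union> {x $ i - xL $ i | i. x $ i \<noteq> xL $ i}
                      \<union> {xU $ i - x $ i | i. x $ i \<noteq> xU $ i})"
      have fin: "finite ({alpha} \<union> {x $ i - xL $ i | i. x $ i \<noteq> xL $ i}
                      \<union> {xU $ i - x $ i | i. x $ i \<noteq> xU $ i})" by simp
      have mpos: "m > 0" unfolding m_def using fin xb assms(3)
        by (subst Min_gr_iff) (auto simp: order_le_neq_trans)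
      have ma: "m \<le> a i" if "v $ i > 0" for i
      proof -
        have "x $ i \<noteq> xU $ i" using vb[of i] that by auto
        then have "m \<le> alpha" "m \<le> xU $ i - x $ i" unfolding m_def using fin
          by (auto intro!: Min_le)
        then show ?thesis by (simp add: a_def)
      qed
      have mb: "m \<le> b i" if "v $ i < 0" for i
      proof -
        have "x $ i \<noteq> xL $ i" using vb[of i] that by auto
        then have "m \<le> alpha" "m \<le> x $ i - xL $ i" unfolding m_def using fin
          by (auto intro!: Min_le)
        then show ?thesis by (simp add: b_def)
      qed
      have S: "(\<Sum>d\<in>coord_dirs xL xU x alpha. \<bar>c d\<bar>) = (\<Sum>i\<in>UNIV. cp i + cn i)"
        by (subst sumD) (auto simp: c0 cT cF cpn)
      have t1: "cp i + cn i \<le> 1" for i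
      proof -
        have "v $ i / a i \<le> 1" if "v $ i > 0" using vpos[of i] that by (simp add: divide_le_eq_1)
        moreover have "- v $ i / b i \<le> 1" if "v $ i < 0" proof - have "b i > 0" "- v $ i \<le> b i" using vneg[of i] that by auto then show ?thesis by (simp add: pos_divide_le_eq pos_le_divide_eq) qed
        ultimately show ?thesis by (auto simp: cp_def cn_def)
      qed
      have t2: "cp i + cn i \<le> \<bar>v $ i\<bar> / m" for i
      proof (cases "v $ i > 0")
        case True
        then have "cp i = v $ i / a i" "cn i = 0" by (auto simp: cp_def cn_def)
        moreover have "v $ i / a i \<le> v $ i / m" using True ma[OF True] mpos
          by (intro divide_left_mono) auto
        ultimately show ?thesis using True by simp
      next
        case False
        show ?thesis
        proof (cases "v $ i < 0")
          case True
          then have "cn i = - v $ i / b i" "cp i = 0" by (auto simp: cp_def cn_def)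
          moreover have "- v $ i / b i \<le> - v $ i / m" using True mb[OF True] mpos
            by (intro divide_left_mono) auto
          ultimately show ?thesis using True by simp
        next
          case False2: False
          then show ?thesis using False mpos by (simp add: cp_def cn_def)
        qed
      qed
      have B1: "(\<Sum>i\<in>UNIV. cp i + cn i) \<le> real CARD('n)"
        using sum_mono[of UNIV "\<lambda>i. cp i + cn i" "\<lambda>_. 1"] t1 by simp
      have "(\<Sum>i\<in>UNIV. cp i + cn i) \<le> (\<Sum>i\<in>UNIV. \<bar>v $ i\<bar> / m)"
        using t2 by (intro sum_mono) auto
      also have "\<dots> = (\<Sum>i\<in>UNIV. \<bar>v $ i\<bar>) / m" by (simp add: sum_divide_distrib)
      also have "\<dots> \<le> sqrt (real CARD('n)) * norm v / m"
        using l1_le[of v] mpos by (intro divide_right_mono) auto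
      also have "\<dots> \<le> sqrt (real CARD('n)) * alpha / m"
        using v mpos by (intro divide_right_mono mult_left_mono) auto
      finally have B2: "(\<Sum>i\<in>UNIV. cp i + cn i) \<le> sqrt (real CARD('n)) * alpha / m" .
      show "(\<Sum>d\<in>coord_dirs xL xU x alpha. \<bar>c d\<bar>) \<le> Lambda_bound xL xU x alpha"
        unfolding S Lambda_bound_def m_def[symmetric] using B1 B2 by simp
    qed
  qed
qed

end
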